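(* Let $b\ge1$, $n\ge1$. Let $K_{n+1}$ be the capacity of the bucket containing label $n+1$ in the random tree of size $n+1$, and let $N_{n,m}$ ($1\le m\le b$) be the number of nodes of capacity $m$ in the random tree of size $n$, both generated by the same growth process. Then for $2\le m\le b$, $$\mathbb P\{K_{n+1}=m\}=\mathbb E(N_{n,m-1})\cdot\begin{cases}\frac{m-1}{n},&\text{bucket recursive trees},\\ \frac{(d-1)(m-1)+1}{(d-1)n+1},&\text{$(b,d)$-ary increasing trees},\\ \frac{(\alpha+1)(m-1)-1}{(\alpha+1)n-1},&\text{$(b,\alpha)$-PORTs},\end{cases}$$ and $$\mathbb P\{K_{n+1}=1\}=\begin{cases}\mathbb E(N_{n,b})\frac bn,&\text{bucket recursive trees},\\ \mathbb E(N_{n,b})\frac{(d-1)b+1}{(d-1)n+1}+\frac{1-\sum_{j=1}^b\mathbb E(N_{n,j})}{(d-1)n+1},&\text{$(b,d)$-ary increasing trees},\\ \mathbb E(N_{n,b})\frac{(\alpha+1)b-1}{(\alpha+1)n-1}+\frac{-1+\sum_{j=1}^b\mathbb E(N_{n,j})}{(\alpha+1)n-1},&\text{$(b,\alpha)$-PORTs}.\end{cases}$$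
   Context: Fix $b\ge1$. A bucket tree is a rooted unordered tree whose nodes ("buckets") $v$ contain $c(v)\in\{1,\dots,b\}$ labels (capacity); $v$ is saturated if $c(v)=b$, and every node with a child is saturated; $d^+(v)$ is its number of children; the size is the total number of labels. Growth process: start with a root bucket containing label 1; given the tree of size $n\ge1$, choose a node $v$ with probability $p(v)$; if $v$ is unsaturated, add label $n+1$ to $v$, otherwise attach to $v$ a new child bucket containing only $n+1$. The families: bucket recursive trees $p(v)=c(v)/n$; $(b,d)$-ary increasing trees ($d\ge2$ integer) $p(v)=\frac{(d-1)c(v)+1-d^+(v)}{(d-1)n+1}$; $(b,\alpha)$-plane oriented recursive trees, $(b,\alpha)$-PORTs ($\alpha>0$) $p(v)=\frac{d^+(v)+(\alpha+1)c(v)-1}{(\alpha+1)n-1}$ (capacities and out-degrees in the current tree of size $n$). *)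

theory Defs
  imports "HOL-Probability.Probability"
begin

text \<open>A bucket tree is represented as a list of buckets (nodes). Bucket i is a pair
  (parent, labels): parent is None for the root (bucket 0) and Some j otherwise,
  labels is the list of labels stored in the bucket.\<close>

type_synonym btree = "(nat option \<times> nat list) list"

datatype family = BRT | Dary nat | PORT real

definition cap :: "btree \<Rightarrow> nat \<Rightarrow> nat" where
  "cap T v = length (snd (T ! v))"

definition outdeg :: "btree \<Rightarrow> nat \<Rightarrow> nat" where
  "outdeg T v = card {j. j < length T \<and> fst (T ! j) = Some v}"

fun sel_prob :: "family \<Rightarrow> nat \<Rightarrow> btree \<Rightarrow> nat \<Rightarrow> real" where
  "sel_prob BRT n T v = real (cap T v) / real n"
| "sel_prob (Dary d) n T v =
     ((real d - 1) * real (cap T v) + 1 - real (outdeg T v)) / ((real d - 1) * real n + 1)"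
| "sel_prob (PORT \<alpha>) n T v =
     (real (outdeg T v) + (\<alpha> + 1) * real (cap T v) - 1) / ((\<alpha> + 1) * real n - 1)"

definition sel_pmf :: "family \<Rightarrow> nat \<Rightarrow> btree \<Rightarrow> nat pmf" where
  "sel_pmf F n T = pmf_of_list (map (\<lambda>v. (v, sel_prob F n T v)) [0..<length T])"

definition grow :: "nat \<Rightarrow> nat \<Rightarrow> btree \<Rightarrow> nat \<Rightarrow> btree" where
  "grow b n T v =
     (if cap T v < b then T[v := (fst (T ! v), snd (T ! v) @ [Suc n])]
      else T @ [(Some v, [Suc n])])"

text \<open>Distribution of the random bucket tree of size n (meaningful for n \<ge> 1).\<close>
fun tree_dist :: "family \<Rightarrow> nat \<Rightarrow> nat \<Rightarrow> btree pmf" where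
  "tree_dist F b 0 = return_pmf [(None, [1])]"
| "tree_dist F b (Suc 0) = return_pmf [(None, [1])]"
| "tree_dist F b (Suc (Suc k)) =
     tree_dist F b (Suc k) \<bind> (\<lambda>T. map_pmf (grow b (Suc k) T) (sel_pmf F (Suc k) T))"

definition label_cap :: "btree \<Rightarrow> nat \<Rightarrow> nat" where
  "label_cap T l = cap T (THE i. i < length T \<and> l \<in> set (snd (T ! i)))"

definition num_cap :: "btree \<Rightarrow> nat \<Rightarrow> nat" where
  "num_cap T m = card {i. i < length T \<and> cap T i = m}"

definition K_prob :: "family \<Rightarrow> nat \<Rightarrow> nat \<Rightarrow> nat \<Rightarrow> real" where
  "K_prob F b n m = measure_pmf.prob (tree_dist F b (Suc n)) {T. label_cap T (Suc n) = m}"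

definition EN :: "family \<Rightarrow> nat \<Rightarrow> nat \<Rightarrow> nat \<Rightarrow> real" where
  "EN F b n m = measure_pmf.expectation (tree_dist F b n) (\<lambda>T. real (num_cap T m))"

end

theory Submission
  imports Defs
begin

definition okF :: "family \<Rightarrow> bool" where
  "okF F \<longleftrightarrow> (\<forall>d. F = Dary d \<longrightarrow> d \<ge> 2) \<and> (\<forall>\<alpha>. F = PORT \<alpha> \<longrightarrow> \<alpha> > 0)"

definition btinv :: "family \<Rightarrow> nat \<Rightarrow> nat \<Rightarrow> btree \<Rightarrow> bool" where
  "btinv F b n T \<longleftrightarrow> T \<noteq> [] \<and> fst (T!0) = None \<and>
    (\<forall>j<length T. 0<j \<longrightarrow> (\<exists>p<length T. fst (T!j) = Some p)) \<and>
    (\<forall>i<length T. 1 \<le> cap T i \<and> cap T i \<le> b) \<and>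
    (\<forall>j<length T. \<forall>p. fst (T!j) = Some p \<longrightarrow> cap T p = b) \<and>
    (\<Sum>i<length T. cap T i) = n \<and>
    (\<forall>i<length T. \<forall>l\<in>set (snd (T!i)). l \<le> n) \<and>
    (\<forall>d. F = Dary d \<longrightarrow> (\<forall>v<length T. real (outdeg T v) \<le> (real d - 1) * real (cap T v) + 1))"

lemma card_lt_sum: "card {i. i < (k::nat) \<and> P i} = (\<Sum>i<k. if P i then 1 else 0::nat)"
proof -
  have "{i. i < k \<and> P i} = {i\<in>{..<k}. P i}" by auto
  then have "card {i. i < k \<and> P i} = (\<Sum>i\<in>{i\<in>{..<k}. P i}. (1::nat))" by (simp only: card_eq_sum)
  also have "\<dots> = (\<Sum>i<k. if P i then 1 else 0)"
    by (rule sum.inter_filter[OF finite_lessThan])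
  finally show ?thesis .
qed

lemma outdeg_sum: "outdeg T v = (\<Sum>j<length T. if fst (T!j) = Some v then 1 else 0)"
  unfolding outdeg_def by (rule card_lt_sum)

lemma num_cap_sum: "num_cap T m = (\<Sum>i<length T. if cap T i = m then 1 else 0)"
  unfolding num_cap_def by (rule card_lt_sum)

lemma sum_outdeg:
  assumes "btinv F b n T"
  shows "(\<Sum>v<length T. outdeg T v) = length T - 1"
proof -
  let ?L = "length T"
  have "(\<Sum>v<?L. outdeg T v) = (\<Sum>j<?L. \<Sum>v<?L. if fst (T!j) = Some v then 1 else 0)"
    unfolding outdeg_sum by (rule sum.swap)
  also have "\<dots> = (\<Sum>j<?L. if j = 0 then 0 else 1)"
  proof (rule sum.cong)
    fix j assume j: "j \<in> {..<?L}"
    show "(\<Sum>v<?L. if fst (T!j) = Some v then 1 else 0) = (if j = 0 then 0 else (1::nat))"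
    proof (cases "j = 0")
      case True then show ?thesis using assms by (simp add: btinv_def)
    next
      case False
      then obtain p where p: "p < ?L" "fst (T!j) = Some p" using assms j by (auto simp: btinv_def)
      then show ?thesis using False by (simp add: sum.delta')
    qed
  qed simp
  also have "\<dots> = ?L - 1"
  proof -
    have "?L > 0" using assms by (simp add: btinv_def)
    then have "{..<?L} = insert 0 {1..<?L}" by auto
    then show ?thesis by simp
  qed
  finally show ?thesis .
qed

lemma sum_num_cap:
  assumes "btinv F b n T"
  shows "(\<Sum>j=1..b. num_cap T j) = length T"
proof -
  have "(\<Sum>j=1..b. num_cap T j) = (\<Sum>i<length T. \<Sum>j=1..b. if cap T i = j then 1 else 0)"
    unfolding num_cap_sum by (rule sum.swap)
  also have "\<dots> = (\<Sum>i<length T. 1)"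
  proof (rule sum.cong)
    fix i assume "i \<in> {..<length T}"
    then have "cap T i \<in> {1..b}" using assms by (auto simp: btinv_def)
    then show "(\<Sum>j=1..b. if cap T i = j then 1 else 0) = (1::nat)"
      by (simp add: sum.delta)
  qed simp
  finally show ?thesis by simp
qed

lemma outdeg_pos_sat:
  assumes "btinv F b n T" "outdeg T v > 0"
  shows "cap T v = b"
proof -
  from assms(2) have "{j. j < length T \<and> fst (T ! j) = Some v} \<noteq> {}"
    unfolding outdeg_def by (metis card.empty less_irrefl)
  then obtain j where "j < length T" "fst (T!j) = Some v" by auto
  then show ?thesis using assms(1) by (auto simp: btinv_def)
qed

lemma unsat_outdeg:
  assumes "btinv F b n T" "cap T v < b"
  shows "outdeg T v = 0"
  using outdeg_pos_sat[OF assms(1)] assms(2) by fastforce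

lemma len_le:
  assumes "btinv F b n T"
  shows "length T \<le> n"
proof -
  have "(\<Sum>i<length T. (1::nat)) \<le> (\<Sum>i<length T. cap T i)"
    by (rule sum_mono) (use assms in \<open>auto simp: btinv_def\<close>)
  then show ?thesis using assms by (simp add: btinv_def)
qed

lemma num_cap_le: "num_cap T m \<le> length T"
  unfolding num_cap_def
  by (rule order_trans[OF card_mono[of "{..<length T}"]]) auto

lemma sum_list_filter_upt:
  "sum_list (map p (filter P [0..<L])) = (\<Sum>u\<in>{u. u < L \<and> P u}. p u)"
proof -
  have "sum_list (map p (filter P [0..<L])) = sum p (set (filter P [0..<L]))"
    by (simp add: sum_list_distinct_conv_sum_set)
  also have "set (filter P [0..<L]) = {u. u < L \<and> P u}" by auto
  finally show ?thesis .
qed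

lemma sel_wf:
  assumes "okF F" "btinv F b n T" "n \<ge> 1"
  shows "pmf_of_list_wf (map (\<lambda>v. (v, sel_prob F n T v)) [0..<length T])"
proof (rule pmf_of_list_wfI)
  fix x assume "x \<in> set (map snd (map (\<lambda>v. (v, sel_prob F n T v)) [0..<length T]))"
  then obtain v where v: "v < length T" "x = sel_prob F n T v" by auto
  have c: "1 \<le> cap T v" using assms(2) v(1) by (auto simp: btinv_def)
  show "x \<ge> 0"
  proof (cases F)
    case BRT then show ?thesis using v by simp
  next
    case (Dary d)
    then have "d \<ge> 2" using assms(1) by (auto simp: okF_def)
    moreover have "real (outdeg T v) \<le> (real d - 1) * real (cap T v) + 1"
      using assms(2) v(1) Dary by (auto simp: btinv_def)
    ultimately show ?thesis using v Dary assms(3) by (auto intro!: divide_nonneg_pos add_pos_nonneg)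
  next
    case (PORT a)
    then have a: "a > 0" using assms(1) by (auto simp: okF_def)
    have h1: "(a + 1) * real (cap T v) \<ge> a + 1" using c a by simp
    have h2: "(a + 1) * real n \<ge> a + 1" using assms(3) a by simp
    have n1: "real (outdeg T v) + (a + 1) * real (cap T v) - 1 \<ge> 0" using h1 a by linarith
    have n2: "(a + 1) * real n - 1 > 0" using h2 a by linarith
    show ?thesis using v PORT divide_nonneg_pos[OF n1 n2] by simp
  qed
next
  let ?L = "length T"
  have so: "real (\<Sum>v<?L. outdeg T v) = real ?L - 1"
  proof -
    have "length T \<ge> 1" using assms(2) by (cases T) (auto simp: btinv_def)
    then show ?thesis using sum_outdeg[OF assms(2)] by (simp add: of_nat_diff)
  qed
  have sc: "real (\<Sum>v<?L. cap T v) = real n" using assms(2) by (simp add: btinv_def)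
  have "sum_list (map snd (map (\<lambda>v. (v, sel_prob F n T v)) [0..<?L])) = (\<Sum>v<?L. sel_prob F n T v)"
    using sum_list_filter_upt[of "sel_prob F n T" "\<lambda>_. True" ?L] by (simp add: lessThan_def o_def)
  also have "\<dots> = 1"
  proof (cases F)
    case BRT
    have "(\<Sum>v<?L. sel_prob F n T v) = (\<Sum>v<?L. real (cap T v)) / real n"
      using BRT by (simp add: sum_divide_distrib)
    also have "\<dots> = 1" using sc assms(3) by simp
    finally show ?thesis .
  next
    case (Dary d)
    then have "d \<ge> 2" using assms(1) by (auto simp: okF_def)
    then have "real d - 1 \<ge> 1" by simp
    then have "(real d - 1) * real n \<ge> 0" by simp
    then have D: "(real d - 1) * real n + 1 > 0" by linarith
    have e1: "(\<Sum>v<?L. sel_prob F n T v) = (\<Sum>v<?L. (real d - 1) * real (cap T v) + 1 - real (outdeg T v)) / ((real d - 1) * real n + 1)"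
      using Dary by (simp add: sum_divide_distrib)
    have e2: "(\<Sum>v<?L. (real d - 1) * real (cap T v) + 1 - real (outdeg T v)) = (real d - 1) * real (\<Sum>v<?L. cap T v) + real ?L - real (\<Sum>v<?L. outdeg T v)"
      by (simp add: sum.distrib sum_subtractf sum_distrib_left)
    have e3: "(real d - 1) * real (\<Sum>v<?L. cap T v) + real ?L - real (\<Sum>v<?L. outdeg T v) = (real d - 1) * real n + 1"
      unfolding so sc by simp
    show ?thesis unfolding e1 e2 e3 using D by simp
  next
    case (PORT a)
    then have a: "a > 0" using assms(1) by (auto simp: okF_def)
    have "(a + 1) * real n \<ge> a + 1" using assms(3) a by simp
    then have D: "(a + 1) * real n - 1 > 0" using a by linarith
    have e1: "(\<Sum>v<?L. sel_prob F n T v) = (\<Sum>v<?L. real (outdeg T v) + (a + 1) * real (cap T v) - 1) / ((a + 1) * real n - 1)"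
      using PORT by (simp add: sum_divide_distrib)
    have e2: "(\<Sum>v<?L. real (outdeg T v) + (a + 1) * real (cap T v) - 1) = real (\<Sum>v<?L. outdeg T v) + (a + 1) * real (\<Sum>v<?L. cap T v) - real ?L"
      by (simp add: sum.distrib sum_subtractf sum_distrib_left)
    have e3: "real (\<Sum>v<?L. outdeg T v) + (a + 1) * real (\<Sum>v<?L. cap T v) - real ?L = (a + 1) * real n - 1"
      unfolding so sc by simp
    show ?thesis unfolding e1 e2 e3 using D by simp
  qed
  finally show "sum_list (map snd (map (\<lambda>v. (v, sel_prob F n T v)) [0..<?L])) = 1" .
qed

lemma prob_sel:
  assumes "okF F" "btinv F b n T" "n \<ge> 1"
  shows "measure_pmf.prob (sel_pmf F n T) A = (\<Sum>v\<in>{v. v < length T \<and> v \<in> A}. sel_prob F n T v)"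
  unfolding sel_pmf_def
  using measure_pmf_of_list[OF sel_wf[OF assms], of A] sum_list_filter_upt[of "sel_prob F n T" "\<lambda>v. v \<in> A" "length T"]
  by (simp add: filter_map o_def)

lemma set_sel:
  assumes "okF F" "btinv F b n T" "n \<ge> 1" "v \<in> set_pmf (sel_pmf F n T)"
  shows "v < length T \<and> sel_prob F n T v > 0"
proof -
  have "pmf (sel_pmf F n T) v = (\<Sum>u\<in>{u. u < length T \<and> u = v}. sel_prob F n T u)"
    unfolding sel_pmf_def
    using pmf_pmf_of_list[OF sel_wf[OF assms(1-3)], of v] sum_list_filter_upt[of "sel_prob F n T" "\<lambda>u. u = v" "length T"]
    by (simp add: filter_map o_def)
  moreover have "pmf (sel_pmf F n T) v \<noteq> 0" using assms(4) by (simp add: set_pmf_eq)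
  moreover have "{u. u < length T \<and> u = v} = (if v < length T then {v} else {})" by auto
  ultimately have vl: "v < length T" and p: "sel_prob F n T v \<noteq> 0"
    by (auto split: if_splits)
  moreover have "sel_prob F n T v \<ge> 0"
    using sel_wf[OF assms(1-3)] vl unfolding pmf_of_list_wf_def by auto
  ultimately show ?thesis by simp
qed


lemma grow_unsat:
  assumes "cap T v < b" "v < length T"
  shows "length (grow b n T v) = length T"
    "\<And>i. i < length T \<Longrightarrow> fst (grow b n T v ! i) = fst (T ! i)"
    "\<And>i. i < length T \<Longrightarrow> cap (grow b n T v) i = (if i = v then Suc (cap T v) else cap T i)"
    "\<And>i. i < length T \<Longrightarrow> set (snd (grow b n T v ! i)) = (if i = v then insert (Suc n) (set (snd (T!i))) else set (snd (T!i)))"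
  using assms by (auto simp: grow_def cap_def nth_list_update)

lemma outdeg_unsat:
  assumes "cap T v < b" "v < length T"
  shows "outdeg (grow b n T v) u = outdeg T u"
proof -
  have "{j. j < length (grow b n T v) \<and> fst (grow b n T v ! j) = Some u} = {j. j < length T \<and> fst (T ! j) = Some u}"
    using assms by (auto simp: grow_def nth_list_update)
  then show ?thesis unfolding outdeg_def by simp
qed

lemma grow_sat:
  assumes "\<not> cap T v < b"
  shows "length (grow b n T v) = Suc (length T)"
    "\<And>i. i < length T \<Longrightarrow> grow b n T v ! i = T ! i"
    "grow b n T v ! length T = (Some v, [Suc n])"
    "\<And>i. i < length T \<Longrightarrow> cap (grow b n T v) i = cap T i"
    "cap (grow b n T v) (length T) = 1"
  using assms by (auto simp: grow_def cap_def nth_append)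

lemma outdeg_sat:
  assumes "\<not> cap T v < b"
  shows "outdeg (grow b n T v) u = outdeg T u + (if u = v then 1 else 0)"
proof -
  let ?S = "{j. j < length T \<and> fst (T ! j) = Some u}"
  have T': "grow b n T v = T @ [(Some v, [Suc n])]" using assms by (simp add: grow_def)
  have e: "{j. j < length (grow b n T v) \<and> fst (grow b n T v ! j) = Some u}
      = (if u = v then insert (length T) ?S else ?S)"
  proof (rule set_eqI)
    fix j
    show "j \<in> {j. j < length (grow b n T v) \<and> fst (grow b n T v ! j) = Some u} \<longleftrightarrow>
          j \<in> (if u = v then insert (length T) ?S else ?S)"
      unfolding T' by (cases "j < length T"; cases "j = length T") (auto simp: nth_append)
  qed
  have f: "finite ?S" by simp
  have nS: "length T \<notin> ?S" by simp
  show ?thesis unfolding outdeg_def e using f nS by simp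
qed

lemma inv_step:
  assumes ok: "okF F" and b: "b \<ge> 1" and n: "n \<ge> 1" and I: "btinv F b n T"
    and v: "v \<in> set_pmf (sel_pmf F n T)"
  shows "btinv F b (Suc n) (grow b n T v)"
proof -
  from set_sel[OF ok I n v] have vl: "v < length T" and pos: "sel_prob F n T v > 0" by auto
  let ?T = "grow b n T v"
  let ?L = "length T"
  have Iu: "T \<noteq> [] \<and> fst (T!0) = None \<and>
    (\<forall>j<?L. 0<j \<longrightarrow> (\<exists>p<?L. fst (T!j) = Some p)) \<and>
    (\<forall>i<?L. 1 \<le> cap T i \<and> cap T i \<le> b) \<and>
    (\<forall>j<?L. \<forall>p. fst (T!j) = Some p \<longrightarrow> cap T p = b) \<and>
    (\<Sum>i<?L. cap T i) = n \<and>
    (\<forall>i<?L. \<forall>l\<in>set (snd (T!i)). l \<le> n) \<and>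
    (\<forall>d. F = Dary d \<longrightarrow> (\<forall>v<?L. real (outdeg T v) \<le> (real d - 1) * real (cap T v) + 1))"
    using I unfolding btinv_def .
  have I1: "T \<noteq> []" using Iu by (rule conjunct1)
  have I2: "fst (T!0) = None" using Iu by simp
  have I3: "\<And>j. j < ?L \<Longrightarrow> 0 < j \<Longrightarrow> \<exists>p<?L. fst (T!j) = Some p" using Iu by simp
  have I4: "\<And>i. i < ?L \<Longrightarrow> 1 \<le> cap T i" using Iu by simp
  have I4': "\<And>i. i < ?L \<Longrightarrow> cap T i \<le> b" using Iu by simp
  have I5: "\<And>j p. j < ?L \<Longrightarrow> fst (T!j) = Some p \<Longrightarrow> cap T p = b" using Iu by simp
  have I6: "(\<Sum>i<?L. cap T i) = n" using Iu by simp
  have hl: "\<And>i l. i < ?L \<Longrightarrow> l \<in> set (snd (T!i)) \<Longrightarrow> l \<le> n" using Iu by simp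
  have I8: "\<And>d u. F = Dary d \<Longrightarrow> u < ?L \<Longrightarrow> real (outdeg T u) \<le> (real d - 1) * real (cap T u) + 1"
    using Iu by simp
  show ?thesis
  proof (cases "cap T v < b")
    case True
    note g = grow_unsat[OF True vl, where n=n]
    have sumc: "(\<Sum>i<?L. cap ?T i) = (\<Sum>i<?L. cap T i + (if i = v then 1 else 0))"
      by (rule sum.cong) (simp_all add: g)
    also have "\<dots> = (\<Sum>i<?L. cap T i) + 1" using vl by (simp add: sum.distrib)
    finally have sumc: "(\<Sum>i<?L. cap ?T i) = Suc n" using I6 by simp
    have par: "\<And>j p. j < ?L \<Longrightarrow> fst (T ! j) = Some p \<Longrightarrow> p \<noteq> v"
      using I5 True by fastforce
    show ?thesis
      unfolding btinv_def
    proof (intro conjI allI impI ballI)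
      show "?T \<noteq> []" using I1 g(1) by (metis length_0_conv)
      show "fst (?T ! 0) = None" using I1 I2 g(2)[of 0] by simp
      show "\<exists>p<length ?T. fst (?T ! j) = Some p" if "j < length ?T" "0 < j" for j
        using I3[of j] that g(1) g(2)[of j] by simp
      show "1 \<le> cap ?T i" "cap ?T i \<le> b" if "i < length ?T" for i
        using I4[of i] I4'[of i] that g(1) g(3)[of i] True by auto
      show "cap ?T p = b" if "j < length ?T" "fst (?T ! j) = Some p" for j p
      proof -
        have jl: "j < ?L" using that g(1) by simp
        have fj: "fst (T!j) = Some p" using that(2) g(2)[OF jl] by simp
        have "p \<noteq> v" using par[OF jl fj] .
        moreover have "p < ?L"
        proof -
          have "j \<noteq> 0" using fj I2 by (metis option.distinct(1))
          then obtain q where "q < ?L" "fst (T!j) = Some q" using I3[OF jl] by blast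
          then show ?thesis using fj by simp
        qed
        ultimately show ?thesis using I5[OF jl fj] g(3)[of p] by simp
      qed
      show "(\<Sum>i<length ?T. cap ?T i) = Suc n" using sumc g(1) by simp
      show "l \<le> Suc n" if "i < length ?T" "l \<in> set (snd (?T ! i))" for i l
      proof (cases "i = v")
        case True
        then have "l = Suc n \<or> l \<in> set (snd (T!i))" using that g(4)[of i] g(1) by auto
        then show ?thesis using hl[of i l] that g(1) by auto
      next
        case False
        then have "l \<in> set (snd (T!i))" using that g(4)[of i] g(1) by auto
        then show ?thesis using hl[of i l] that g(1) by auto
      qed
      show "real (outdeg ?T u) \<le> (real d - 1) * real (cap ?T u) + 1" if "F = Dary d" "u < length ?T" for d u
      proof -
        have ul: "u < ?L" using that g(1) by simp
        have "d \<ge> 2" using ok that by (auto simp: okF_def)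
        then have "(real d - 1) * real (cap T u) \<le> (real d - 1) * real (cap ?T u)"
          using g(3)[OF ul] by (auto intro!: mult_left_mono)
        moreover have "real (outdeg T u) \<le> (real d - 1) * real (cap T u) + 1"
          using I8[OF that(1) ul] .
        ultimately show ?thesis by (simp add: outdeg_unsat[OF True vl])
      qed
    qed
  next
    case False
    note g = grow_sat[OF False, where n=n]
    have capv: "cap T v = b" using False I4'[OF vl] by simp
    have sumc: "(\<Sum>i<Suc ?L. cap ?T i) = (\<Sum>i<?L. cap T i) + 1"
      using g(4,5) by simp
    then have sumc: "(\<Sum>i<length ?T. cap ?T i) = Suc n" using I6 g(1) by simp
    have nth': "\<And>i. i < length ?T \<Longrightarrow> ?T ! i = (if i < ?L then T ! i else (Some v, [Suc n]))"
      using g(1,2,3) by (auto simp: less_Suc_eq)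
    show ?thesis
      unfolding btinv_def
    proof (intro conjI allI impI ballI)
      show "?T \<noteq> []" using g(1) by (metis Zero_not_Suc length_0_conv)
      show "fst (?T ! 0) = None" using I1 I2 g(2)[of 0] by simp
      show "\<exists>p<length ?T. fst (?T ! j) = Some p" if jl: "j < length ?T" and j0: "0 < j" for j
      proof (cases "j < ?L")
        case True
        then obtain p where "p < ?L" "fst (T!j) = Some p" using I3 j0 by blast
        then show ?thesis using True g(1) g(2)[of j] by (intro exI[of _ p]) simp
      next
        case False then show ?thesis using jl nth'[of j] vl g(1) by auto
      qed
      show "1 \<le> cap ?T i" "cap ?T i \<le> b" if "i < length ?T" for i
      proof -
        have "i < ?L \<or> i = ?L" using that g(1) by linarith
        then show "1 \<le> cap ?T i" "cap ?T i \<le> b" using I4[of i] I4'[of i] g(4)[of i] g(5) b by auto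
      qed
      show "cap ?T p = b" if jl: "j < length ?T" and fj: "fst (?T ! j) = Some p" for j p
      proof (cases "j < ?L")
        case True
        then have fj': "fst (T!j) = Some p" using fj g(2)[OF True] by simp
        have "j \<noteq> 0" using fj' I2 by (metis option.distinct(1))
        then obtain q where "q < ?L" "fst (T!j) = Some q" using I3[OF True] by blast
        then have "p < ?L" using fj' by simp
        then show ?thesis using g(4)[of p] I5[OF True fj'] by simp
      next
        case False
        then have "p = v" using jl fj nth'[of j] by simp
        then show ?thesis using g(4)[OF vl] capv by simp
      qed
      show "(\<Sum>i<length ?T. cap ?T i) = Suc n" using sumc .
      show "l \<le> Suc n" if "i < length ?T" "l \<in> set (snd (?T ! i))" for i l
      proof (cases "i < ?L")
        case True
        then have "l \<in> set (snd (T!i))" using that nth'[of i] by auto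
        then show ?thesis using hl[of i l] True by auto
      next
        case False
        then have "l = Suc n" using that nth'[of i] by auto
        then show ?thesis by simp
      qed
      show "real (outdeg ?T u) \<le> (real d - 1) * real (cap ?T u) + 1" if dd: "F = Dary d" and ul': "u < length ?T" for d u
      proof -
        have d2: "d \<ge> 2" using ok dd by (auto simp: okF_def)
        have od: "outdeg ?T u = outdeg T u + (if u = v then 1 else 0)"
          by (rule outdeg_sat[OF False])
        show ?thesis
        proof (cases "u < ?L")
          case uL: True
          have bnd: "real (outdeg T u) \<le> (real d - 1) * real (cap T u) + 1"
            using I8[OF dd uL] .
          show ?thesis
          proof (cases "u = v")
            case True
            have "real d - 1 \<ge> 1" using d2 by simp
            then have "(real d - 1) * real n \<ge> 0" by simp
            then have D: "(real d - 1) * real n + 1 > 0" by linarith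
            have "((real d - 1) * real (cap T v) + 1 - real (outdeg T v)) / ((real d - 1) * real n + 1) > 0"
              using pos dd by simp
            then have "real (outdeg T v) < (real d - 1) * real (cap T v) + 1"
              using D by (simp add: zero_less_divide_iff)
            also have "(real d - 1) * real (cap T v) + 1 = real ((d - 1) * cap T v + 1)"
              using d2 by (simp add: of_nat_diff)
            finally have "outdeg T v < (d - 1) * cap T v + 1" by linarith
            then have "real (outdeg T v + 1) \<le> real ((d - 1) * cap T v + 1)" by linarith
            then show ?thesis using True od g(4)[OF vl] d2
              by (simp add: of_nat_diff)
          next
            case False
            then show ?thesis using bnd od g(4)[OF uL] by simp
          qed
        next
          case False
          then have uL: "u = ?L" using ul' g(1) by simp
          have "outdeg T ?L = 0"
          proof -
            have "{j. j < ?L \<and> fst (T ! j) = Some ?L} = {}"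
            proof (safe)
              fix j assume j: "j < ?L" "fst (T ! j) = Some ?L"
              show "j \<in> {}"
              proof (cases "j = 0")
                case True then show ?thesis using I2 j by simp
              next
                case False
                then obtain p where "p < ?L" "fst (T!j) = Some p" using I3 j(1) by blast
                then show ?thesis using j by simp
              qed
            qed
            then show ?thesis by (simp add: outdeg_def)
          qed
          moreover have "?L \<noteq> v" using vl by simp
          ultimately have "outdeg ?T u = 0" using od uL by simp
          moreover have "(real d - 1) * real (cap ?T u) \<ge> 0" using d2 by simp
          ultimately show ?thesis by simp
        qed
      qed
    qed
  qed
qed

lemma tree_dist_Suc:
  assumes "n \<ge> 1"
  shows "tree_dist F b (Suc n) = tree_dist F b n \<bind> (\<lambda>T. map_pmf (grow b n T) (sel_pmf F n T))"
  using assms by (cases n) auto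

lemma inv_tree:
  assumes ok: "okF F" and b: "b \<ge> 1" and n: "n \<ge> 1"
  shows "T \<in> set_pmf (tree_dist F b n) \<Longrightarrow> btinv F b n T"
  using n
proof (induction n arbitrary: T rule: nat_induct_at_least)
  case base
  then have T: "T = [(None, [1])]" by simp
  have "{j. j < length T \<and> fst (T ! j) = Some 0} = {}" unfolding T by auto
  then have od: "outdeg T 0 = 0" unfolding outdeg_def by simp
  show ?case unfolding btinv_def
  proof (intro conjI allI impI ballI)
    show "real (outdeg T v) \<le> (real d - 1) * real (cap T v) + 1" if "F = Dary d" "v < length T" for d v
    proof -
      have "d \<ge> 2" using ok that by (auto simp: okF_def)
      then show ?thesis using that od by (simp add: T cap_def)
    qed
  qed (use b in \<open>auto simp: T cap_def\<close>)
next
  case (Suc n)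
  from Suc.prems obtain T0 v where T0: "T0 \<in> set_pmf (tree_dist F b n)"
    and v: "v \<in> set_pmf (sel_pmf F n T0)" and T: "T = grow b n T0 v"
    unfolding tree_dist_Suc[OF Suc.hyps(1)] by auto
  show ?case using inv_step[OF ok b Suc.hyps(1) Suc.IH[OF T0] v] T by simp
qed

lemma label_cap_grow:
  assumes I: "btinv F b n T" and vl: "v < length T"
  shows "label_cap (grow b n T v) (Suc n) = (if cap T v < b then Suc (cap T v) else 1)"
proof -
  have hl: "\<And>i l. i < length T \<Longrightarrow> l \<in> set (snd (T!i)) \<Longrightarrow> l \<le> n"
    using I unfolding btinv_def by blast
  show ?thesis
  proof (cases "cap T v < b")
    case True
    note g = grow_unsat[OF True vl, where n=n]
    have "(THE i. i < length (grow b n T v) \<and> Suc n \<in> set (snd (grow b n T v ! i))) = v"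
    proof (rule the_equality)
      show "v < length (grow b n T v) \<and> Suc n \<in> set (snd (grow b n T v ! v))"
        using g(1) g(4)[OF vl] vl by simp
    next
      fix i assume i: "i < length (grow b n T v) \<and> Suc n \<in> set (snd (grow b n T v ! i))"
      show "i = v"
      proof (rule ccontr)
        assume "i \<noteq> v"
        then have "Suc n \<in> set (snd (T ! i))" using i g(1) g(4)[of i] by simp
        then show False using hl[of i "Suc n"] i g(1) by simp
      qed
    qed
    then show ?thesis unfolding label_cap_def using True g(3)[OF vl] by simp
  next
    case False
    note g = grow_sat[OF False, where n=n]
    have "(THE i. i < length (grow b n T v) \<and> Suc n \<in> set (snd (grow b n T v ! i))) = length T"
    proof (rule the_equality)
      show "length T < length (grow b n T v) \<and> Suc n \<in> set (snd (grow b n T v ! length T))"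
        using g(1) g(3) by simp
    next
      fix i assume i: "i < length (grow b n T v) \<and> Suc n \<in> set (snd (grow b n T v ! i))"
      show "i = length T"
      proof (rule ccontr)
        assume "i \<noteq> length T"
        then have il: "i < length T" using i g(1) by simp
        then have "Suc n \<in> set (snd (T ! i))" using i g(2)[OF il] by simp
        then show False using hl[OF il] by fastforce
      qed
    qed
    then show ?thesis unfolding label_cap_def using False g(5) by simp
  qed
qed

lemma measure_bind_real:
  "measure_pmf.prob (bind_pmf M N) A = measure_pmf.expectation M (\<lambda>x. measure_pmf.prob (N x) A)"
proof -
  have int: "integrable (measure_pmf M) (\<lambda>x. measure_pmf.prob (N x) A)"
    by (rule measure_pmf.integrable_const_bound[where B=1]) auto
  have "ennreal (measure_pmf.prob (bind_pmf M N) A) = emeasure (bind_pmf M N) A"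
    by (simp add: measure_pmf.emeasure_eq_measure)
  also have "\<dots> = (\<integral>\<^sup>+x. ennreal (measure_pmf.prob (N x) A) \<partial>M)"
    by (subst emeasure_bind_pmf) (simp add: measure_pmf.emeasure_eq_measure)
  also have "\<dots> = ennreal (measure_pmf.expectation M (\<lambda>x. measure_pmf.prob (N x) A))"
    by (rule nn_integral_eq_integral[OF int]) auto
  finally show ?thesis
    by (subst (asm) ennreal_inj) (auto intro: integral_nonneg_AE)
qed

lemma K_expect:
  assumes ok: "okF F" and b: "b \<ge> 1" and n: "n \<ge> 1"
  shows "K_prob F b n m = measure_pmf.expectation (tree_dist F b n)
     (\<lambda>T. \<Sum>v\<in>{v. v < length T \<and> (if cap T v < b then Suc (cap T v) else 1) = m}. sel_prob F n T v)"
proof -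
  have "K_prob F b n m = measure_pmf.expectation (tree_dist F b n)
      (\<lambda>T. measure_pmf.prob (map_pmf (grow b n T) (sel_pmf F n T)) {T. label_cap T (Suc n) = m})"
    unfolding K_prob_def tree_dist_Suc[OF n] by (rule measure_bind_real)
  also have "\<dots> = measure_pmf.expectation (tree_dist F b n)
     (\<lambda>T. \<Sum>v\<in>{v. v < length T \<and> (if cap T v < b then Suc (cap T v) else 1) = m}. sel_prob F n T v)"
  proof (rule integral_cong_AE)
    show "AE T in measure_pmf (tree_dist F b n).
        measure_pmf.prob (map_pmf (grow b n T) (sel_pmf F n T)) {T. label_cap T (Suc n) = m} =
        (\<Sum>v\<in>{v. v < length T \<and> (if cap T v < b then Suc (cap T v) else 1) = m}. sel_prob F n T v)"
    proof (rule AE_pmfI)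
      fix T assume T: "T \<in> set_pmf (tree_dist F b n)"
      have I: "btinv F b n T" by (rule inv_tree[OF ok b n T])
      have "measure_pmf.prob (map_pmf (grow b n T) (sel_pmf F n T)) {T. label_cap T (Suc n) = m}
          = measure_pmf.prob (sel_pmf F n T) (grow b n T -` {T. label_cap T (Suc n) = m})"
        by simp
      also have "\<dots> = (\<Sum>v\<in>{v. v < length T \<and> v \<in> grow b n T -` {T. label_cap T (Suc n) = m}}. sel_prob F n T v)"
        by (rule prob_sel[OF ok I n])
      also have "{v. v < length T \<and> v \<in> grow b n T -` {T. label_cap T (Suc n) = m}}
          = {v. v < length T \<and> (if cap T v < b then Suc (cap T v) else 1) = m}"
        using label_cap_grow[OF I] by auto
      finally show "measure_pmf.prob (map_pmf (grow b n T) (sel_pmf F n T)) {T. label_cap T (Suc n) = m} =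
        (\<Sum>v\<in>{v. v < length T \<and> (if cap T v < b then Suc (cap T v) else 1) = m}. sel_prob F n T v)" .
    qed
  qed simp_all
  finally show ?thesis .
qed

definition cst :: "family \<Rightarrow> nat \<Rightarrow> nat \<Rightarrow> real" where
  "cst F n m = (case F of
              BRT \<Rightarrow> (real m - 1) / real n
            | Dary d \<Rightarrow> ((real d - 1) * (real m - 1) + 1) / ((real d - 1) * real n + 1)
            | PORT \<alpha> \<Rightarrow> ((\<alpha> + 1) * (real m - 1) - 1) / ((\<alpha> + 1) * real n - 1))"

lemma inner_m:
  assumes I: "btinv F b n T" and m: "2 \<le> m" "m \<le> b"
  shows "(\<Sum>v\<in>{v. v < length T \<and> (if cap T v < b then Suc (cap T v) else 1) = m}. sel_prob F n T v)
     = real (num_cap T (m - 1)) * cst F n m"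
proof -
  have set: "{v. v < length T \<and> (if cap T v < b then Suc (cap T v) else 1) = m} = {v. v < length T \<and> cap T v = m - 1}"
    using m by auto
  have each: "sel_prob F n T v = cst F n m" if "v \<in> {v. v < length T \<and> cap T v = m - 1}" for v
  proof -
    have c: "cap T v = m - 1" using that by simp
    then have "cap T v < b" using m by simp
    then have o: "outdeg T v = 0" by (rule unsat_outdeg[OF I])
    have rc: "real (cap T v) = real m - 1" using c m by (simp add: of_nat_diff)
    show ?thesis by (cases F) (simp_all add: cst_def o rc)
  qed
  have "(\<Sum>v\<in>{v. v < length T \<and> cap T v = m - 1}. sel_prob F n T v) = (\<Sum>v\<in>{v. v < length T \<and> cap T v = m - 1}. cst F n m)"
    by (rule sum.cong) (simp_all add: each)
  also have "\<dots> = real (num_cap T (m - 1)) * cst F n m"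
    by (simp add: num_cap_def)
  finally show ?thesis unfolding set .
qed

lemma sat_set:
  assumes I: "btinv F b n T"
  shows "{v. v < length T \<and> (if cap T v < b then Suc (cap T v) else 1) = 1} = {v. v < length T \<and> cap T v = b}"
proof -
  have "\<And>v. v < length T \<Longrightarrow> 1 \<le> cap T v \<and> cap T v \<le> b" using I unfolding btinv_def by blast
  then show ?thesis by force
qed

lemma sat_outdeg:
  assumes I: "btinv F b n T"
  shows "(\<Sum>v\<in>{v. v < length T \<and> cap T v = b}. real (outdeg T v)) = (\<Sum>j=1..b. real (num_cap T j)) - 1"
proof -
  have cb: "\<And>v. v < length T \<Longrightarrow> cap T v \<le> b" using I unfolding btinv_def by blast
  have "(\<Sum>v\<in>{v. v < length T \<and> cap T v = b}. real (outdeg T v)) = (\<Sum>v<length T. real (outdeg T v))"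
  proof (rule sum.mono_neutral_left)
    show "\<forall>i\<in>{..<length T} - {v. v < length T \<and> cap T v = b}. real (outdeg T i) = 0"
    proof
      fix i assume "i \<in> {..<length T} - {v. v < length T \<and> cap T v = b}"
      then have "cap T i < b" using cb[of i] by auto
      then show "real (outdeg T i) = 0" using unsat_outdeg[OF I] by simp
    qed
  qed auto
  also have "\<dots> = real (\<Sum>v<length T. outdeg T v)" by simp
  also have "\<dots> = real (length T) - 1"
  proof -
    have "length T \<ge> 1" using I by (cases T) (auto simp: btinv_def)
    then show ?thesis using sum_outdeg[OF I] by (simp add: of_nat_diff)
  qed
  also have "real (length T) = (\<Sum>j=1..b. real (num_cap T j))"
    using sum_num_cap[OF I] by (metis of_nat_sum)
  finally show ?thesis .
qed

lemma inner_1_BRT: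
  assumes I: "btinv F b n T" and F: "F = BRT"
  shows "(\<Sum>v\<in>{v. v < length T \<and> (if cap T v < b then Suc (cap T v) else 1) = 1}. sel_prob F n T v)
     = real (num_cap T b) * (real b / real n)"
proof -
  have "(\<Sum>v\<in>{v. v < length T \<and> cap T v = b}. sel_prob F n T v) = (\<Sum>v\<in>{v. v < length T \<and> cap T v = b}. real b / real n)"
    by (rule sum.cong) (simp_all add: F)
  also have "\<dots> = real (num_cap T b) * (real b / real n)" by (simp add: num_cap_def)
  finally show ?thesis unfolding sat_set[OF I] .
qed

lemma inner_1_Dary:
  assumes I: "btinv F b n T" and F: "F = Dary d"
  shows "(\<Sum>v\<in>{v. v < length T \<and> (if cap T v < b then Suc (cap T v) else 1) = 1}. sel_prob F n T v)
     = real (num_cap T b) * (((real d - 1) * real b + 1) / ((real d - 1) * real n + 1))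
       + (1 - (\<Sum>j=1..b. real (num_cap T j))) / ((real d - 1) * real n + 1)"
proof -
  let ?S = "{v. v < length T \<and> cap T v = b}"
  let ?D = "(real d - 1) * real n + 1"
  have "(\<Sum>v\<in>?S. sel_prob F n T v) = (\<Sum>v\<in>?S. ((real d - 1) * real b + 1) / ?D - real (outdeg T v) / ?D)"
    by (rule sum.cong) (simp_all add: F diff_divide_distrib)
  also have "\<dots> = real (card ?S) * (((real d - 1) * real b + 1) / ?D) - (\<Sum>v\<in>?S. real (outdeg T v)) / ?D"
    by (simp add: sum_subtractf sum_divide_distrib)
  also have "\<dots> = real (num_cap T b) * (((real d - 1) * real b + 1) / ?D) + (1 - (\<Sum>j=1..b. real (num_cap T j))) / ?D"
    unfolding sat_outdeg[OF I] num_cap_def by (simp add: diff_divide_distrib add_divide_distrib)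
  finally show ?thesis unfolding sat_set[OF I] .
qed

lemma inner_1_PORT:
  assumes I: "btinv F b n T" and F: "F = PORT a"
  shows "(\<Sum>v\<in>{v. v < length T \<and> (if cap T v < b then Suc (cap T v) else 1) = 1}. sel_prob F n T v)
     = real (num_cap T b) * (((a + 1) * real b - 1) / ((a + 1) * real n - 1))
       + (-1 + (\<Sum>j=1..b. real (num_cap T j))) / ((a + 1) * real n - 1)"
proof -
  let ?S = "{v. v < length T \<and> cap T v = b}"
  let ?D = "(a + 1) * real n - 1"
  have "(\<Sum>v\<in>?S. sel_prob F n T v) = (\<Sum>v\<in>?S. ((a + 1) * real b - 1) / ?D + real (outdeg T v) / ?D)"
    by (rule sum.cong) (simp_all add: F add_divide_distrib diff_divide_distrib)
  also have "\<dots> = real (card ?S) * (((a + 1) * real b - 1) / ?D) + (\<Sum>v\<in>?S. real (outdeg T v)) / ?D"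
    by (simp add: sum.distrib sum_divide_distrib)
  also have "\<dots> = real (num_cap T b) * (((a + 1) * real b - 1) / ?D) + (-1 + (\<Sum>j=1..b. real (num_cap T j))) / ?D"
    unfolding sat_outdeg[OF I] num_cap_def by simp
  finally show ?thesis unfolding sat_set[OF I] .
qed

theorem mainTheorem5:
  fixes F :: family and b n :: nat
  assumes "b \<ge> 1" and "n \<ge> 1"
    and "\<And>d. F = Dary d \<Longrightarrow> d \<ge> 2"
    and "\<And>\<alpha>. F = PORT \<alpha> \<Longrightarrow> \<alpha> > 0"
  shows "(\<forall>m\<in>{2..b}. K_prob F b n m = EN F b n (m - 1) *
           (case F of
              BRT \<Rightarrow> (real m - 1) / real n
            | Dary d \<Rightarrow> ((real d - 1) * (real m - 1) + 1) / ((real d - 1) * real n + 1)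
            | PORT \<alpha> \<Rightarrow> ((\<alpha> + 1) * (real m - 1) - 1) / ((\<alpha> + 1) * real n - 1)))
       \<and> K_prob F b n 1 =
           (case F of
              BRT \<Rightarrow> EN F b n b * real b / real n
            | Dary d \<Rightarrow> EN F b n b * ((real d - 1) * real b + 1) / ((real d - 1) * real n + 1)
                 + (1 - (\<Sum>j=1..b. EN F b n j)) / ((real d - 1) * real n + 1)
            | PORT \<alpha> \<Rightarrow> EN F b n b * ((\<alpha> + 1) * real b - 1) / ((\<alpha> + 1) * real n - 1)
                 + (-1 + (\<Sum>j=1..b. EN F b n j)) / ((\<alpha> + 1) * real n - 1))"
proof -
  have ok: "okF F" using assms(3,4) by (auto simp: okF_def)
  have b: "b \<ge> 1" and n: "n \<ge> 1" using assms(1,2) .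
  let ?M = "tree_dist F b n"
  have supp: "\<And>T. T \<in> set_pmf ?M \<Longrightarrow> btinv F b n T" using inv_tree[OF ok b n] .
  have intN: "integrable (measure_pmf ?M) (\<lambda>T. real (num_cap T j))" for j
  proof (rule measure_pmf.integrable_const_bound[where B="real n"])
    show "AE T in measure_pmf ?M. norm (real (num_cap T j)) \<le> real n"
    proof (rule AE_pmfI)
      fix T assume "T \<in> set_pmf ?M"
      then have "btinv F b n T" by (rule supp)
      then have "num_cap T j \<le> n" using num_cap_le[of T j] len_le by (metis order_trans)
      then show "norm (real (num_cap T j)) \<le> real n" by simp
    qed
  qed simp
  let ?g = "\<lambda>m T. \<Sum>v\<in>{v. v < length T \<and> (if cap T v < b then Suc (cap T v) else 1) = m}. sel_prob F n T v"
  have part1: "K_prob F b n m = EN F b n (m - 1) * cst F n m" if m: "m \<in> {2..b}" for m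
  proof -
    have "K_prob F b n m = measure_pmf.expectation ?M (?g m)" by (rule K_expect[OF ok b n])
    also have "\<dots> = measure_pmf.expectation ?M (\<lambda>T. real (num_cap T (m - 1)) * cst F n m)"
    proof (rule integral_cong_AE)
      show "AE T in measure_pmf ?M. ?g m T = real (num_cap T (m - 1)) * cst F n m"
      proof (rule AE_pmfI)
        fix T assume "T \<in> set_pmf ?M"
        have m2: "2 \<le> m" "m \<le> b" using m by auto
        show "?g m T = real (num_cap T (m - 1)) * cst F n m"
          by (rule inner_m[OF supp[OF \<open>T \<in> set_pmf ?M\<close>] m2])
      qed
    qed simp_all
    also have "\<dots> = EN F b n (m - 1) * cst F n m" by (simp add: EN_def)
    finally show ?thesis .
  qed
  have cong: "measure_pmf.expectation ?M (?g k) = measure_pmf.expectation ?M h"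
    if h: "\<And>T. btinv F b n T \<Longrightarrow> ?g k T = h T" for k h
  proof (rule integral_cong_AE)
    show "AE T in measure_pmf ?M. ?g k T = h T"
    proof (rule AE_pmfI)
      fix T assume "T \<in> set_pmf ?M"
      show "?g k T = h T" by (rule h[OF supp[OF \<open>T \<in> set_pmf ?M\<close>]])
    qed
  qed simp_all
  have K1: "K_prob F b n 1 = measure_pmf.expectation ?M (?g 1)" by (rule K_expect[OF ok b n])
  have part2: "K_prob F b n 1 =
           (case F of
              BRT \<Rightarrow> EN F b n b * real b / real n
            | Dary d \<Rightarrow> EN F b n b * ((real d - 1) * real b + 1) / ((real d - 1) * real n + 1)
                 + (1 - (\<Sum>j=1..b. EN F b n j)) / ((real d - 1) * real n + 1)
            | PORT \<alpha> \<Rightarrow> EN F b n b * ((\<alpha> + 1) * real b - 1) / ((\<alpha> + 1) * real n - 1)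
                 + (-1 + (\<Sum>j=1..b. EN F b n j)) / ((\<alpha> + 1) * real n - 1))"
  proof (cases F)
    case BRT
    have "measure_pmf.expectation ?M (?g 1) = measure_pmf.expectation ?M (\<lambda>T. real (num_cap T b) * (real b / real n))"
      by (rule cong) (rule inner_1_BRT[OF _ BRT])
    also have "\<dots> = EN F b n b * real b / real n" by (simp add: EN_def)
    finally show ?thesis using K1 BRT by simp
  next
    case (Dary d)
    let ?D = "(real d - 1) * real n + 1"
    let ?A = "((real d - 1) * real b + 1) / ?D"
    have "measure_pmf.expectation ?M (?g 1) = measure_pmf.expectation ?M
        (\<lambda>T. real (num_cap T b) * ?A + (1 - (\<Sum>j=1..b. real (num_cap T j))) / ?D)"
      by (rule cong) (rule inner_1_Dary[OF _ Dary])
    also have "\<dots> = EN F b n b * ?A + (1 - (\<Sum>j=1..b. EN F b n j)) / ?D"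
      by (simp add: EN_def intN integral_sum)
    finally show ?thesis using K1 Dary by simp
  next
    case (PORT a)
    let ?D = "(a + 1) * real n - 1"
    let ?A = "((a + 1) * real b - 1) / ?D"
    have "measure_pmf.expectation ?M (?g 1) = measure_pmf.expectation ?M
        (\<lambda>T. real (num_cap T b) * ?A + (-1 + (\<Sum>j=1..b. real (num_cap T j))) / ?D)"
      by (rule cong) (rule inner_1_PORT[OF _ PORT])
    also have "\<dots> = EN F b n b * ?A + (-1 + (\<Sum>j=1..b. EN F b n j)) / ?D"
      by (simp add: EN_def intN integral_sum)
    finally show ?thesis using K1 PORT by simp
  qed
  show ?thesis using part1 part2 unfolding cst_def by blast
qed

end
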